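(* Let $P$ be an ergodic transition matrix on a finite set $\mathcal{X}$ with minimum stationary probability $\pi_\star$ and pseudo-spectral gap $\gamma_{\mathsf{ps}}$. If $p$ is a positive integer with $p<1/\gamma_{\mathsf{ps}}$, then $$\gamma_{\mathsf{ps}}(P^p)>\frac{p\,\gamma_{\mathsf{ps}}}{2\log(4e/\pi_\star)+2}.$$
   Context: $P$ is row-stochastic on finite $\mathcal{X}$, ergodic (primitive), with unique stationary distribution $\pi>0$, $\pi_\star=\min_x\pi(x)$, and time reversal $P^\star(x,x')=\pi(x')P(x',x)/\pi(x)$. For a transition matrix $Q$ with stationary distribution $\pi$, $\gamma_\dagger(Q)\doteq 1-\lambda_2(Q^\star Q)$, where $1=\lambda_1\ge\lambda_2\ge\dots\ge 0$ are the eigenvalues of $Q^\star Q$ counted with multiplicity. The pseudo-spectral gap is $\gamma_{\mathsf{ps}}(Q)=\max_{k\ge1}\gamma_\dagger(Q^k)/k$ and $\gamma_{\mathsf{ps}}=\gamma_{\mathsf{ps}}(P)$. $\log$ is the natural logarithm. *)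

theory Defs
  imports "HOL-Analysis.Analysis" "HOL-Computational_Algebra.Polynomial" "HOL-Library.Multiset"
begin

type_synonym 'n sqmat = "real ^ 'n ^ 'n"

primrec matpow :: "'n::finite sqmat \<Rightarrow> nat \<Rightarrow> 'n sqmat" where
  "matpow A 0 = mat 1"
| "matpow A (Suc k) = A ** matpow A k"

definition row_stochastic :: "'n::finite sqmat \<Rightarrow> bool" where
  "row_stochastic P \<longleftrightarrow> (\<forall>i j. P $ i $ j \<ge> 0) \<and> (\<forall>i. (\<Sum>j\<in>UNIV. P $ i $ j) = 1)"

text \<open>Ergodic = primitive: some power has all entries strictly positive.\<close>
definition primitive :: "'n::finite sqmat \<Rightarrow> bool" where
  "primitive P \<longleftrightarrow> (\<exists>k. \<forall>i j. matpow P k $ i $ j > 0)"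

definition stationary :: "'n::finite sqmat \<Rightarrow> ('n \<Rightarrow> real) \<Rightarrow> bool" where
  "stationary P mu \<longleftrightarrow> (\<forall>x. mu x \<ge> 0) \<and> (\<Sum>x\<in>UNIV. mu x) = 1 \<and>
     (\<forall>y. (\<Sum>x\<in>UNIV. mu x * P $ x $ y) = mu y)"

definition time_rev :: "('n::finite \<Rightarrow> real) \<Rightarrow> 'n sqmat \<Rightarrow> 'n sqmat" where
  "time_rev mu Q = (\<chi> x x'. mu x' * Q $ x' $ x / mu x)"

definition charpoly :: "'n::finite sqmat \<Rightarrow> real poly" where
  "charpoly A = det (\<chi> i j. (if i = j then [:0, 1:] else 0) - [:A $ i $ j:])"

definition eigs_desc :: "'n::finite sqmat \<Rightarrow> real list" where
  "eigs_desc A = rev (sorted_list_of_multiset (proots (charpoly A)))"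

text \<open>Second largest eigenvalue counted with multiplicity; padded with 0
  (the convention lambda_i \<ge> 0) when the state space is a singleton.\<close>
definition lambda2 :: "'n::finite sqmat \<Rightarrow> real" where
  "lambda2 A = (eigs_desc A @ [0]) ! 1"

definition gamma_dag :: "('n::finite \<Rightarrow> real) \<Rightarrow> 'n sqmat \<Rightarrow> real" where
  "gamma_dag mu Q = 1 - lambda2 (time_rev mu Q ** Q)"

definition gamma_ps :: "('n::finite \<Rightarrow> real) \<Rightarrow> 'n sqmat \<Rightarrow> real" where
  "gamma_ps mu Q = (SUP k\<in>{1::nat..}. gamma_dag mu (matpow Q k) / real k)"

definition pi_star :: "('n::finite \<Rightarrow> real) \<Rightarrow> real" where
  "pi_star mu = Min (range mu)"

end

theory Submission
  imports Defs
begin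



lemma sym_dot:
  fixes S :: "real^'n^'n"
  assumes "transpose S = S"
  shows "x \<bullet> (S *v y) = (S *v x) \<bullet> y"
  by (metis assms dot_lmul_matrix inner_commute transpose_matrix_vector)

lemma cont_quad: "continuous_on A (\<lambda>x::real^'n. x \<bullet> (S *v x))"
  by (intro continuous_intros linear_continuous_on matrix_vector_mul_bounded_linear)

lemma quad_zero_lemma:
  fixes a b :: real
  assumes "\<And>t. 2*t*a + t^2*b \<le> 0"
  shows "a = 0"
proof (rule ccontr)
  assume "a \<noteq> 0"
  define B where "B = \<bar>b\<bar>+1"
  define t where "t = a / B"
  have pos: "B > 0" "2*B + b > 0" unfolding B_def by (auto simp: abs_if)
  have "2*t*a + t^2*b = a^2 * (2*B + b) / B^2"
    unfolding t_def using pos by (simp add: field_simps power2_eq_square)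
  moreover have "a^2 * (2*B + b) / B^2 > 0"
    using \<open>a \<noteq> 0\<close> pos by (intro divide_pos_pos mult_pos_pos) auto
  ultimately show False using assms[of t] by linarith
qed




lemma spectral_sub:
  fixes S :: "real^'n^'n"
  assumes sym: "transpose S = S"
  shows "subspace V \<Longrightarrow> (\<forall>x\<in>V. S *v x \<in> V) \<Longrightarrow>
    \<exists>B. B \<subseteq> V \<and> span B = V \<and> pairwise orthogonal B \<and>
        (\<forall>b\<in>B. norm b = 1 \<and> S *v b = (b \<bullet> (S *v b)) *\<^sub>R b)"
proof (induction "dim V" arbitrary: V rule: less_induct)
  case less
  show ?case
  proof (cases "V = {0}")
    case True
    then show ?thesis by (intro exI[of _ "{}"]) auto
  next
    case False
    then obtain x0 where x0: "x0 \<in> V" "x0 \<noteq> 0" using less.prems subspace_0 by blast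
    define K where "K = V \<inter> sphere 0 1"
    have "compact K" unfolding K_def
      using less.prems(1) by (intro closed_Int_compact closed_subspace compact_sphere)
    moreover have "K \<noteq> {}"
    proof -
      have "x0 /\<^sub>R norm x0 \<in> K" unfolding K_def using x0 less.prems(1)
        by (auto simp: subspace_scale)
      then show ?thesis by blast
    qed
    ultimately obtain v where vK: "v \<in> K" and vmax: "\<And>y. y \<in> K \<Longrightarrow> y \<bullet> (S *v y) \<le> v \<bullet> (S *v v)"
      using continuous_attains_sup[OF _ _ cont_quad] by metis
    define l where "l = v \<bullet> (S *v v)"
    have vV: "v \<in> V" and nv: "norm v = 1" using vK unfolding K_def by auto
    have vv: "v \<bullet> v = 1" using nv by (simp add: dot_square_norm)
    have C1: "x \<bullet> (S *v x) \<le> l * (x \<bullet> x)" if "x \<in> V" for x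
    proof (cases "x = 0")
      case True then show ?thesis by simp
    next
      case False
      define y where "y = x /\<^sub>R norm x"
      have "y \<in> K" unfolding K_def y_def using that False less.prems(1)
        by (auto simp: subspace_scale)
      then have "y \<bullet> (S *v y) \<le> l" using vmax l_def by auto
      moreover have "y \<bullet> (S *v y) = (x \<bullet> (S *v x)) / (norm x)^2"
        unfolding y_def by (simp add: matrix_vector_mult_scaleR power2_eq_square divide_inverse)
      moreover have "x \<bullet> x = (norm x)^2" by (simp add: dot_square_norm)
      moreover have "norm x > 0" using False by simp
      ultimately show ?thesis by (simp add: field_simps)
    qed
    have C2: "w \<bullet> (S *v v) = 0" if "w \<in> V" "w \<bullet> v = 0" for w
    proof (rule quad_zero_lemma[where b = "w \<bullet> (S *v w) - l * (w \<bullet> w)"])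
      fix t :: real
      have "v + t *\<^sub>R w \<in> V" using that vV less.prems(1) by (simp add: subspace_add subspace_scale)
      then have "(v + t *\<^sub>R w) \<bullet> (S *v (v + t *\<^sub>R w)) \<le> l * ((v + t *\<^sub>R w) \<bullet> (v + t *\<^sub>R w))"
        by (rule C1)
      moreover have "v \<bullet> (S *v w) = w \<bullet> (S *v v)"
        using sym_dot[OF sym, of v w] by (simp add: inner_commute)
      ultimately show "2 * t * (w \<bullet> (S *v v)) + t^2 * (w \<bullet> (S *v w) - l * (w \<bullet> w)) \<le> 0"
        using that(2) vv
        by (simp add: matrix_vector_right_distrib matrix_vector_mult_scaleR inner_add_left
            inner_add_right l_def algebra_simps power2_eq_square inner_commute[of v w])
    qed
    have C3: "S *v v = l *\<^sub>R v"
    proof -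
      define u where "u = S *v v - l *\<^sub>R v"
      have uV: "u \<in> V" unfolding u_def using less.prems vV by (simp add: subspace_diff subspace_scale)
      have uv: "u \<bullet> v = 0" unfolding u_def using vv
        by (simp add: inner_diff_left l_def inner_commute[of "S *v v" v])
      have "u \<bullet> u = u \<bullet> (S *v v) - l * (u \<bullet> v)" unfolding u_def
        by (simp add: inner_diff_right)
      also have "\<dots> = 0" using C2[OF uV uv] uv by simp
      finally show ?thesis unfolding u_def by simp
    qed
    define V' where "V' = {x \<in> V. x \<bullet> v = 0}"
    have subV': "subspace V'" unfolding V'_def subspace_def using less.prems(1)
      by (auto simp: subspace_def inner_add_left)
    have invV': "\<forall>x\<in>V'. S *v x \<in> V'"
    proof
      fix x assume "x \<in> V'"
      then have "x \<in> V" "x \<bullet> v = 0" unfolding V'_def by auto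
      moreover have "(S *v x) \<bullet> v = x \<bullet> (S *v v)"
        using sym_dot[OF sym, of x v] by simp
      ultimately show "S *v x \<in> V'" unfolding V'_def using less.prems(2) C3 by simp
    qed
    have "span V' \<subset> span V"
    proof -
      have "V' \<subseteq> V" unfolding V'_def by auto
      moreover have "v \<notin> V'" using vv unfolding V'_def by auto
      ultimately show ?thesis using vV subV' less.prems(1) by (metis psubsetI span_eq_iff)
    qed
    then have "dim V' < dim V" by (rule dim_psubset)
    from less.hyps[OF this subV' invV'] obtain B' where
      B': "B' \<subseteq> V'" "span B' = V'" "pairwise orthogonal B'"
          "\<forall>b\<in>B'. norm b = 1 \<and> S *v b = (b \<bullet> (S *v b)) *\<^sub>R b" by blast
    show ?thesis
    proof (intro exI[of _ "insert v B'"] conjI)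
      show "insert v B' \<subseteq> V" using B'(1) vV unfolding V'_def by auto
      show "span (insert v B') = V"
      proof
        show "span (insert v B') \<subseteq> V" using \<open>insert v B' \<subseteq> V\<close> less.prems(1)
          by (simp add: span_minimal)
        show "V \<subseteq> span (insert v B')"
        proof
          fix x assume xV: "x \<in> V"
          have "x - (x \<bullet> v) *\<^sub>R v \<in> V'" unfolding V'_def using xV vV less.prems(1) vv
            by (simp add: subspace_diff subspace_scale inner_diff_left)
          then have "x - (x \<bullet> v) *\<^sub>R v \<in> span (insert v B')" using B'(2)
            by (metis span_mono subset_insertI subsetD)
          moreover have "(x \<bullet> v) *\<^sub>R v \<in> span (insert v B')" by (simp add: span_base span_scale)
          ultimately show "x \<in> span (insert v B')" using span_add by fastforce
        qed
      qed
      show "pairwise orthogonal (insert v B')"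
        using B'(1,3) unfolding V'_def pairwise_insert
        by (auto simp: orthogonal_def inner_commute)
      show "\<forall>b\<in>insert v B'. norm b = 1 \<and> S *v b = (b \<bullet> (S *v b)) *\<^sub>R b"
        using B'(4) nv C3 l_def by auto
    qed
  qed
qed




lemma onb_exists:
  fixes S :: "real^'n^'n"
  assumes sym: "transpose S = S" and ne: "norm e = 1" and Se: "S *v e = e"
  shows "\<exists>(\<phi>::'n \<Rightarrow> real^'n) j0. \<phi> j0 = e \<and> (\<forall>i j. \<phi> i \<bullet> \<phi> j = (if i = j then 1 else 0)) \<and>
            (\<forall>j. S *v \<phi> j = (\<phi> j \<bullet> (S *v \<phi> j)) *\<^sub>R \<phi> j)"
proof -
  define V where "V = {x. x \<bullet> e = 0}"
  have subV: "subspace V" unfolding V_def subspace_def by (auto simp: inner_add_left)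
  have invV: "\<forall>x\<in>V. S *v x \<in> V" unfolding V_def
    using sym_dot[OF sym] Se by (metis mem_Collect_eq)
  obtain B' where B': "B' \<subseteq> V" "span B' = V" "pairwise orthogonal B'"
     "\<forall>b\<in>B'. norm b = 1 \<and> S *v b = (b \<bullet> (S *v b)) *\<^sub>R b"
    using spectral_sub[OF sym subV invV] by blast
  have ee: "e \<bullet> e = 1" using ne by (simp add: dot_square_norm)
  have eB': "e \<notin> B'" using B'(1) ee unfolding V_def by auto
  define B where "B = insert e B'"
  have orthB: "pairwise orthogonal B" unfolding B_def pairwise_insert using B'(1,3)
    unfolding V_def by (auto simp: orthogonal_def inner_commute)
  have B0: "0 \<notin> B" unfolding B_def using ne B'(4) by auto
  have indB: "independent B" by (rule pairwise_orthogonal_independent[OF orthB B0])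
  have finB: "finite B" using indB by (rule finiteI_independent)
  have spanB: "span B = UNIV"
  proof -
    have "x \<in> span B" for x
    proof -
      have "x - (x \<bullet> e) *\<^sub>R e \<in> V" unfolding V_def using ee by (simp add: inner_diff_left)
      then have "x - (x \<bullet> e) *\<^sub>R e \<in> span B" using B'(2) unfolding B_def
        by (metis span_mono subset_insertI subsetD)
      moreover have "(x \<bullet> e) *\<^sub>R e \<in> span B" unfolding B_def by (simp add: span_base span_scale)
      ultimately show ?thesis using span_add by fastforce
    qed
    then show ?thesis by auto
  qed
  have cardB: "card B = CARD('n)"
  proof -
    have "card B = dim B" using dim_eq_card_independent[OF indB] by simp
    also have "\<dots> = dim (span B)" by simp
    also have "\<dots> = CARD('n)" using spanB by simp
    finally show ?thesis .
  qed
  obtain j0 :: 'n where True by simp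
  have "card (UNIV - {j0}) = card B'"
    using cardB finB eB' unfolding B_def by (simp add: card_Diff_singleton)
  moreover have "finite B'" using finB unfolding B_def by simp
  ultimately obtain h where h: "bij_betw h (UNIV - {j0}) B'"
    using finite_same_card_bij[of "UNIV - {j0}" B'] by auto
  define \<phi> where "\<phi> = h(j0 := e)"
  have phiB: "\<phi> j \<in> B" for j unfolding \<phi>_def B_def using h bij_betwE by fastforce
  have phiinj: "\<phi> i \<noteq> \<phi> j" if "i \<noteq> j" for i j
  proof -
    have "h i \<noteq> h j" if "i \<noteq> j0" "j \<noteq> j0" "i \<noteq> j" for i j
      using h that unfolding bij_betw_def inj_on_def by blast
    moreover have "h i \<noteq> e" if "i \<noteq> j0" for i using h that eB' bij_betwE by fastforce
    ultimately show ?thesis using that unfolding \<phi>_def by (cases "i = j0"; cases "j = j0") auto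
  qed
  have Bprop: "\<forall>b\<in>B. norm b = 1 \<and> S *v b = (b \<bullet> (S *v b)) *\<^sub>R b"
    unfolding B_def using B'(4) ne Se ee by (auto simp: inner_commute)
  show ?thesis
  proof (intro exI[of _ \<phi>] exI[of _ j0] conjI allI)
    show "\<phi> j0 = e" unfolding \<phi>_def by simp
    fix i j
    show "\<phi> i \<bullet> \<phi> j = (if i = j then 1 else 0)"
    proof (cases "i = j")
      case True
      then show ?thesis using Bprop phiB[of i] by (simp add: dot_square_norm)
    next
      case False
      then show ?thesis using orthB phiB[of i] phiB[of j] phiinj[OF False]
        unfolding pairwise_def orthogonal_def by auto
    qed
  next
    fix j show "S *v \<phi> j = (\<phi> j \<bullet> (S *v \<phi> j)) *\<^sub>R \<phi> j" using Bprop phiB[of j] by auto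
  qed
qed




definition lift :: "real^'n^'m \<Rightarrow> real poly^'n^'m" where
  "lift M = (\<chi> i j. [:M$i$j:])"

definition XI :: "real poly^'n^'n" where
  "XI = (\<chi> i j. if i = j then [:0, 1:] else 0)"

lemma pconst_add: "[:a + b:] = [:a:] + [:b::'a::comm_monoid_add:]"
  by simp

lemma pconst_sum: "[:sum f A:] = (\<Sum>x\<in>A. [:f x:])"
proof (induction A rule: infinite_finite_induct)
  case (insert x F)
  then show ?case by (simp add: pconst_add)
qed auto

lemma charpoly_alt: "charpoly A = det (XI - lift A)"
  unfolding charpoly_def XI_def lift_def
  by (rule arg_cong[where f=det]) (simp add: vec_eq_iff)

lemma lift_mul: "lift (A ** B) = lift A ** lift B"
  unfolding lift_def matrix_matrix_mult_def
  by (simp add: vec_eq_iff pconst_sum mult.commute)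

lemma lift_one: "lift (mat 1 :: real^'n^'n) = mat 1"
  unfolding lift_def by (simp add: vec_eq_iff mat_def)

lemma mat_sub_ldistrib: "(A::'a::comm_ring_1^'n^'m) ** (B - C) = A ** B - A ** C"
  by (simp add: vec_eq_iff matrix_matrix_mult_def sum_subtractf algebra_simps)

lemma mat_sub_rdistrib: "((B::'a::comm_ring_1^'n^'m) - C) ** A = B ** A - C ** A"
  by (simp add: vec_eq_iff matrix_matrix_mult_def sum_subtractf algebra_simps)

lemma XI_comm: "XI ** (M :: real poly^'n^'n) = M ** XI"
  unfolding XI_def matrix_matrix_mult_def
  by (simp add: vec_eq_iff if_distrib if_distribR sum.delta sum.delta' mult.commute cong: if_cong)

lemma charpoly_similar:
  fixes U V D :: "real^'n^'n"
  assumes "U ** V = mat 1"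
  shows "charpoly (U ** D ** V) = charpoly D"
proof -
  have "XI - lift (U ** D ** V) = lift U ** (XI - lift D) ** lift V"
  proof -
    have "lift U ** (XI - lift D) ** lift V = lift U ** XI ** lift V - lift U ** lift D ** lift V"
      by (simp add: mat_sub_ldistrib mat_sub_rdistrib)
    also have "lift U ** XI ** lift V = XI ** (lift U ** lift V)"
      by (metis XI_comm matrix_mul_assoc)
    also have "\<dots> = XI" by (simp add: lift_mul[symmetric] assms lift_one)
    finally show ?thesis by (simp add: lift_mul)
  qed
  then have "charpoly (U ** D ** V) = det (lift U) * det (XI - lift D) * det (lift V)"
    by (simp add: charpoly_alt det_mul)
  also have "\<dots> = det (lift U ** lift V) * det (XI - lift D)"
    by (simp add: det_mul)
  also have "\<dots> = charpoly D" by (simp add: lift_mul[symmetric] assms lift_one charpoly_alt)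
  finally show ?thesis .
qed

lemma charpoly_diag:
  fixes D :: "real^'n^'n"
  assumes "\<And>i j. i \<noteq> j \<Longrightarrow> D$i$j = 0"
  shows "charpoly D = (\<Prod>i\<in>UNIV. [:- D$i$i, 1:])"
  unfolding charpoly_alt
  by (subst det_diagonal) (auto simp: XI_def lift_def assms)




lemma sorted_lam2:
  fixes M' :: "real multiset"
  assumes le1: "\<forall>x\<in>#M'. x \<le> 1" and ge0: "\<forall>x\<in>#M'. 0 \<le> x"
  defines "L \<equiv> (rev (sorted_list_of_multiset (add_mset 1 M')) @ [0]) ! 1"
  shows "L \<ge> 0 \<and> (\<forall>c\<ge>0. L \<le> c \<longleftrightarrow> (\<forall>x\<in>#M'. x \<le> c))"
proof -
  define xs where "xs = sorted_list_of_multiset M'"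
  have sxs: "sorted xs" unfolding xs_def by simp
  have setxs: "set xs = set_mset M'" unfolding xs_def by simp
  have "sorted (xs @ [1])" using sxs le1 setxs by (auto simp: sorted_append)
  moreover have "mset (xs @ [1]) = add_mset 1 M'" unfolding xs_def by simp
  ultimately have "sorted_list_of_multiset (add_mset 1 M') = xs @ [1]"
    by (metis sorted_list_of_multiset_mset sorted_sort_id)
  then have L: "L = (rev xs @ [0]) ! 0" unfolding L_def by simp
  show ?thesis
  proof (cases "xs = []")
    case True
    then have "M' = {#}" using setxs by (metis set_mset_eq_empty_iff empty_set)
    then show ?thesis using L True by simp
  next
    case False
    then have L2: "L = last xs" using L by (simp add: nth_append hd_rev[symmetric] hd_conv_nth)
    have lastin: "last xs \<in> set xs" using False by simp
    have allle: "\<forall>x\<in>set xs. x \<le> last xs"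
    proof
      fix x assume "x \<in> set xs"
      then obtain i where i: "i < length xs" "xs ! i = x" by (auto simp: in_set_conv_nth)
      have "last xs = xs ! (length xs - 1)" using False by (simp add: last_conv_nth)
      moreover have "xs ! i \<le> xs ! (length xs - 1)"
        using i(1) by (intro sorted_nth_mono[OF sxs]) auto
      ultimately show "x \<le> last xs" using i by simp
    qed
    show ?thesis using L2 lastin allle setxs ge0 by fastforce
  qed
qed

lemma dot_mat: "(x::real^'n) \<bullet> (A *v y) = (transpose A *v x) \<bullet> y"
  by (simp add: dot_lmul_matrix)

lemma lambda2_char:
  fixes S :: "real^'n^'n"
  assumes sym: "transpose S = S" and ne: "norm e = 1" and Se: "S *v e = e"
    and psd: "\<And>g. 0 \<le> g \<bullet> (S *v g)" and contr: "\<And>g. g \<bullet> (S *v g) \<le> g \<bullet> g"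
  shows "lambda2 S \<ge> 0 \<and> (\<forall>c\<ge>0. lambda2 S \<le> c \<longleftrightarrow> (\<forall>g. g \<bullet> e = 0 \<longrightarrow> g \<bullet> (S *v g) \<le> c * (g \<bullet> g)))"
proof -
  obtain \<phi> :: "'n \<Rightarrow> real^'n" and j0 where phi: "\<phi> j0 = e"
    "\<And>i j. \<phi> i \<bullet> \<phi> j = (if i = j then 1 else 0)"
    "\<And>j. S *v \<phi> j = (\<phi> j \<bullet> (S *v \<phi> j)) *\<^sub>R \<phi> j"
    using onb_exists[OF sym ne Se] by blast
  define \<mu> where "\<mu> j = \<phi> j \<bullet> (S *v \<phi> j)" for j
  have mu01: "0 \<le> \<mu> j" "\<mu> j \<le> 1" for j
    using psd[of "\<phi> j"] contr[of "\<phi> j"] phi(2)[of j j] unfolding \<mu>_def by auto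
  have mu0: "\<mu> j0 = 1" unfolding \<mu>_def phi(1) Se using ne by (simp add: dot_square_norm)
  define U :: "real^'n^'n" where "U = (\<chi> i j. \<phi> j $ i)"
  define D :: "real^'n^'n" where "D = (\<chi> i j. if i = j then \<mu> i else 0)"
  have UtU: "transpose U ** U = mat 1"
    using phi(2) unfolding U_def by (simp add: vec_eq_iff matrix_matrix_mult_def transpose_def
        mat_def inner_vec_def)
  then have UUt: "U ** transpose U = mat 1" using matrix_left_right_inverse by blast
  have SU: "S ** U = U ** D"
  proof -
    have "(S ** U) $ i $ j = (S *v \<phi> j) $ i" for i j
      unfolding U_def by (simp add: matrix_matrix_mult_def matrix_vector_mult_def)
    moreover have "(U ** D) $ i $ j = \<mu> j * \<phi> j $ i" for i j
      unfolding U_def D_def by (simp add: matrix_matrix_mult_def if_distrib if_distribR sum.delta'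
          cong: if_cong)
    ultimately show ?thesis using phi(3) unfolding \<mu>_def by (simp add: vec_eq_iff)
  qed
  have Sdec: "S = U ** D ** transpose U"
    by (metis SU UUt matrix_mul_assoc matrix_mul_rid)
  have "charpoly S = charpoly D" using charpoly_similar[OF UUt, of D] Sdec by simp
  also have "\<dots> = (\<Prod>i\<in>UNIV. [:- \<mu> i, 1:])" by (subst charpoly_diag) (auto simp: D_def)
  finally have cp: "charpoly S = (\<Prod>i\<in>UNIV. [:- \<mu> i, 1:])" .
  have "proots (charpoly S) = (\<Sum>i\<in>UNIV. {#\<mu> i#})"
    unfolding cp by (subst proots_prod) auto
  also have "\<dots> = add_mset 1 (\<Sum>i\<in>UNIV-{j0}. {#\<mu> i#})"
    using mu0 by (subst sum.remove[of _ j0]) auto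
  finally have pr: "proots (charpoly S) = add_mset 1 (\<Sum>i\<in>UNIV-{j0}. {#\<mu> i#})" .
  define M' where "M' = (\<Sum>i\<in>UNIV-{j0}. {#\<mu> i#})"
  have setM': "set_mset M' = \<mu> ` (UNIV - {j0})" unfolding M'_def by (auto simp: set_mset_sum)
  have L: "lambda2 S = (rev (sorted_list_of_multiset (add_mset 1 M')) @ [0]) ! 1"
    unfolding lambda2_def eigs_desc_def pr M'_def ..
  have SL: "lambda2 S \<ge> 0 \<and> (\<forall>c\<ge>0. lambda2 S \<le> c \<longleftrightarrow> (\<forall>x\<in>#M'. x \<le> c))"
    unfolding L by (rule sorted_lam2) (use setM' mu01 in auto)
  have key: "(\<forall>x\<in>#M'. x \<le> c) \<longleftrightarrow> (\<forall>g. g \<bullet> e = 0 \<longrightarrow> g \<bullet> (S *v g) \<le> c * (g \<bullet> g))"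
    if c0: "c \<ge> 0" for c
  proof
    assume H: "\<forall>x\<in>#M'. x \<le> c"
    show "\<forall>g. g \<bullet> e = 0 \<longrightarrow> g \<bullet> (S *v g) \<le> c * (g \<bullet> g)"
    proof (intro allI impI)
      fix g :: "real^'n" assume ge: "g \<bullet> e = 0"
      define h where "h = transpose U *v g"
      have hj: "h $ j = \<phi> j \<bullet> g" for j
        unfolding h_def U_def by (simp add: matrix_vector_mult_def transpose_def inner_vec_def mult.commute)
      have hj0: "h $ j0 = 0" using hj[of j0] phi(1) ge by (simp add: inner_commute)
      have "g \<bullet> (S *v g) = h \<bullet> (D *v h)"
        unfolding Sdec h_def by (simp add: dot_mat matrix_vector_mul_assoc[symmetric] matrix_transpose_mul)
      also have "\<dots> = (\<Sum>j\<in>UNIV. \<mu> j * (h $ j)^2)"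
        unfolding D_def by (simp add: inner_vec_def matrix_vector_mult_def if_distrib if_distribR
            sum.delta' power2_eq_square algebra_simps cong: if_cong)
      also have "\<dots> \<le> (\<Sum>j\<in>UNIV. c * (h $ j)^2)"
      proof (rule sum_mono)
        fix j :: 'n
        show "\<mu> j * (h $ j)^2 \<le> c * (h $ j)^2"
        proof (cases "j = j0")
          case True then show ?thesis using hj0 by simp
        next
          case False
          then have "\<mu> j \<in># M'" using setM' by auto
          then show ?thesis using H by (simp add: mult_right_mono)
        qed
      qed
      also have "\<dots> = c * (h \<bullet> h)" by (simp add: inner_vec_def sum_distrib_left power2_eq_square)
      also have "h \<bullet> h = g \<bullet> g"
      proof -
        have "h \<bullet> h = g \<bullet> ((U ** transpose U) *v g)"
          unfolding h_def by (simp add: dot_mat matrix_vector_mul_assoc[symmetric])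
        then show ?thesis using UUt by simp
      qed
      finally show "g \<bullet> (S *v g) \<le> c * (g \<bullet> g)" .
    qed
  next
    assume H: "\<forall>g. g \<bullet> e = 0 \<longrightarrow> g \<bullet> (S *v g) \<le> c * (g \<bullet> g)"
    show "\<forall>x\<in>#M'. x \<le> c"
    proof
      fix x assume "x \<in># M'"
      then obtain j where j: "j \<noteq> j0" "x = \<mu> j" using setM' by auto
      have "\<phi> j \<bullet> e = 0" using phi(2)[of j j0] phi(1) j(1) by simp
      then have "\<phi> j \<bullet> (S *v \<phi> j) \<le> c * (\<phi> j \<bullet> \<phi> j)" using H by blast
      then show "x \<le> c" using j phi(2)[of j j] unfolding \<mu>_def by simp
    qed
  qed
  show ?thesis
  proof (intro conjI allI impI)
    show "lambda2 S \<ge> 0" using SL by blast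
  next
    fix c :: real assume "c \<ge> 0"
    then show "lambda2 S \<le> c \<longleftrightarrow> (\<forall>g. g \<bullet> e = 0 \<longrightarrow> g \<bullet> (S *v g) \<le> c * (g \<bullet> g))"
      using SL key[of c] by simp
  qed
qed




definition ap :: "real^'n^'n \<Rightarrow> ('n \<Rightarrow> real) \<Rightarrow> 'n \<Rightarrow> real" where
  "ap Q f = (\<lambda>x. \<Sum>y\<in>UNIV. Q$x$y * f y)"

definition wn :: "('n::finite \<Rightarrow> real) \<Rightarrow> ('n \<Rightarrow> real) \<Rightarrow> real" where
  "wn mu f = (\<Sum>x\<in>UNIV. mu x * (f x)^2)"

definition Bd :: "('n::finite \<Rightarrow> real) \<Rightarrow> real^'n^'n \<Rightarrow> real \<Rightarrow> bool" where
  "Bd mu Q c \<longleftrightarrow> (\<forall>f. (\<Sum>x\<in>UNIV. mu x * f x) = 0 \<longrightarrow> wn mu (ap Q f) \<le> c * wn mu f)"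

definition good :: "('n::finite \<Rightarrow> real) \<Rightarrow> real^'n^'n \<Rightarrow> bool" where
  "good mu Q \<longleftrightarrow> (\<forall>x. mu x > 0) \<and> (\<Sum>x\<in>UNIV. mu x) = 1 \<and> (\<forall>x y. Q$x$y \<ge> 0) \<and>
     (\<forall>x. (\<Sum>y\<in>UNIV. Q$x$y) = 1) \<and> (\<forall>y. (\<Sum>x\<in>UNIV. mu x * Q$x$y) = mu y)"

lemma contraction:
  assumes "good mu Q"
  shows "wn mu (ap Q f) \<le> wn mu f"
proof -
  have G: "\<And>x y. Q$x$y \<ge> 0" "\<And>x. (\<Sum>y\<in>UNIV. Q$x$y) = 1"
    "\<And>y. (\<Sum>x\<in>UNIV. mu x * Q$x$y) = mu y" "\<And>x. mu x > 0"
    using assms unfolding good_def by auto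
  have pt: "(ap Q f x)^2 \<le> (\<Sum>y\<in>UNIV. Q$x$y * (f y)^2)" for x
  proof -
    define m where "m = ap Q f x"
    have "0 \<le> (\<Sum>y\<in>UNIV. Q$x$y * (f y - m)^2)"
      using G(1) by (intro sum_nonneg) auto
    also have "\<dots> = (\<Sum>y\<in>UNIV. Q$x$y * (f y)^2) - 2 * m * (\<Sum>y\<in>UNIV. Q$x$y * f y)
        + m^2 * (\<Sum>y\<in>UNIV. Q$x$y)"
      by (simp add: power2_eq_square algebra_simps sum.distrib sum_subtractf sum_distrib_left)
    also have "\<dots> = (\<Sum>y\<in>UNIV. Q$x$y * (f y)^2) - m^2"
      using G(2) unfolding m_def ap_def by (simp add: power2_eq_square)
    finally show ?thesis unfolding m_def by simp
  qed
  have "wn mu (ap Q f) \<le> (\<Sum>x\<in>UNIV. mu x * (\<Sum>y\<in>UNIV. Q$x$y * (f y)^2))"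
    unfolding wn_def using G(4) pt by (intro sum_mono mult_left_mono) (auto intro: less_imp_le)
  also have "\<dots> = (\<Sum>y\<in>UNIV. (\<Sum>x\<in>UNIV. mu x * Q$x$y) * (f y)^2)"
    by (simp add: sum_distrib_left sum_distrib_right mult.assoc) (rule sum.swap)
  also have "\<dots> = wn mu f" unfolding wn_def using G(3) by simp
  finally show ?thesis .
qed

lemma mean_pres:
  assumes "good mu Q"
  shows "(\<Sum>x\<in>UNIV. mu x * ap Q f x) = (\<Sum>y\<in>UNIV. mu y * f y)"
proof -
  have "(\<Sum>x\<in>UNIV. mu x * ap Q f x) = (\<Sum>y\<in>UNIV. (\<Sum>x\<in>UNIV. mu x * Q$x$y) * f y)"
    unfolding ap_def by (simp add: sum_distrib_left sum_distrib_right mult.assoc) (rule sum.swap)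
  then show ?thesis using assms unfolding good_def by simp
qed

lemma ap_mul: "ap (A ** B) f = ap A (ap B f)"
proof
  fix x
  have "ap (A ** B) f x = (\<Sum>y\<in>UNIV. \<Sum>k\<in>UNIV. A$x$k * (B$k$y * f y))"
    unfolding ap_def matrix_matrix_mult_def by (simp add: sum_distrib_right mult.assoc)
  also have "\<dots> = (\<Sum>k\<in>UNIV. \<Sum>y\<in>UNIV. A$x$k * (B$k$y * f y))" by (rule sum.swap)
  also have "\<dots> = ap A (ap B f) x" unfolding ap_def by (simp add: sum_distrib_left)
  finally show "ap (A ** B) f x = ap A (ap B f) x" .
qed

lemma Bd_mul:
  assumes "good mu B" "Bd mu A c1" "Bd mu B c2" "c1 \<ge> 0"
  shows "Bd mu (A ** B) (c1 * c2)"
  unfolding Bd_def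
proof (intro allI impI)
  fix f :: "'a \<Rightarrow> real" assume f0: "(\<Sum>x\<in>UNIV. mu x * f x) = 0"
  have "wn mu (ap (A ** B) f) = wn mu (ap A (ap B f))" by (simp add: ap_mul)
  also have "\<dots> \<le> c1 * wn mu (ap B f)"
    using assms(2) mean_pres[OF assms(1), of f] f0 unfolding Bd_def by simp
  also have "\<dots> \<le> c1 * (c2 * wn mu f)"
    using assms(3,4) f0 unfolding Bd_def by (simp add: mult_left_mono)
  finally show "wn mu (ap (A ** B) f) \<le> c1 * c2 * wn mu f" by simp
qed

lemma Bd_one: "good mu Q \<Longrightarrow> Bd mu Q 1"
  unfolding Bd_def using contraction by auto




lemma sum_delta_mult: "(\<Sum>k\<in>(UNIV::'a::finite set). (if i = k then a k else 0) * (b k :: real)) = a i * b i"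
proof -
  have "(\<Sum>k\<in>UNIV. (if i = k then a k else 0) * b k) = (\<Sum>k\<in>UNIV. if i = k then a k * b k else 0)"
    by (intro sum.cong) auto
  then show ?thesis by simp
qed
lemma sum_delta_mult2: "(\<Sum>k\<in>(UNIV::'a::finite set). (a k :: real) * (if k = j then b k else 0)) = a j * b j"
proof -
  have "(\<Sum>k\<in>UNIV. a k * (if k = j then b k else 0)) = (\<Sum>k\<in>UNIV. if k = j then a k * b k else 0)"
    by (intro sum.cong) auto
  then show ?thesis by simp
qed
lemma DgDi:
  fixes sq :: "'a::finite \<Rightarrow> real"
  assumes sqpos: "\<And>x. sq x > 0"
  shows "(\<chi> i j. if i = j then sq i else 0) ** (\<chi> i j. if i = j then 1 / sq i else 0) = (mat 1 :: real^'a^'a)"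
proof -
  have "(\<Sum>k\<in>UNIV. (if i = k then sq i else 0) * (if k = j then 1 / sq k else 0)) = (if i = j then 1 else 0)" for i j :: 'a
    using sum_delta_mult[of i "\<lambda>_. sq i" "\<lambda>k. (if k = j then 1 / sq k else 0)"] sqpos[of i]
    by (auto simp: less_imp_neq[symmetric])
  then show ?thesis by (simp add: vec_eq_iff matrix_matrix_mult_def mat_def)
qed
lemma DAD:
  fixes sq :: "'a::finite \<Rightarrow> real" and A :: "real^'a^'a"
  shows "((\<chi> i j. if i = j then sq i else 0) ** A ** (\<chi> i j. if i = j then 1 / sq i else 0)) $x$z = sq x * A$x$z / sq z"
proof -
  have 1: "((\<chi> i j. if i = j then sq i else 0) ** A) $ x $ y = sq x * A$x$y" for y
    using sum_delta_mult[of x "\<lambda>_. sq x" "\<lambda>k. A$k$y"] by (simp add: matrix_matrix_mult_def)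
  have "((\<chi> i j. if i = j then sq i else 0) ** A ** (\<chi> i j. if i = j then 1 / sq i else 0)) $x$z
     = (\<Sum>k\<in>UNIV. ((\<chi> i j. if i = j then sq i else 0) ** A) $ x $ k * (if k = z then 1 / sq k else 0))"
    by (simp add: matrix_matrix_mult_def)
  also have "\<dots> = ((\<chi> i j. if i = j then sq i else 0) ** A) $ x $ z * (1 / sq z)"
    by (rule sum_delta_mult2)
  finally show ?thesis by (simp add: 1)
qed

lemma lam_Bd:
  assumes good: "good mu Q"
  shows "lambda2 (time_rev mu Q ** Q) \<ge> 0 \<and>
         (\<forall>c\<ge>0. lambda2 (time_rev mu Q ** Q) \<le> c \<longleftrightarrow> Bd mu Q c)"
proof -
  have G: "\<And>x y. Q$x$y \<ge> 0" "\<And>x. (\<Sum>y\<in>UNIV. Q$x$y) = 1"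
    "\<And>y. (\<Sum>x\<in>UNIV. mu x * Q$x$y) = mu y" "\<And>x. mu x > 0" "(\<Sum>x\<in>UNIV. mu x) = 1"
    using good unfolding good_def by auto
  define sq where "sq x = sqrt (mu x)" for x
  have sqpos: "sq x > 0" for x unfolding sq_def using G(4) by simp
  have sqsq: "sq x * sq x = mu x" for x unfolding sq_def using G(4) by (simp add: less_imp_le)
  define A where "A = time_rev mu Q ** Q"
  define K where "K x z = (\<Sum>x'\<in>UNIV. mu x' * Q$x'$x * Q$x'$z)" for x z
  have Ksym: "K x z = K z x" for x z unfolding K_def by (simp add: mult_ac)
  have Aent: "A$x$z = K x z / mu x" for x z
    unfolding A_def K_def time_rev_def matrix_matrix_mult_def by (simp add: sum_divide_distrib)
  define Dg :: "real^'a^'a" where "Dg = (\<chi> i j. if i = j then sq i else 0)"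
  define Di :: "real^'a^'a" where "Di = (\<chi> i j. if i = j then 1 / sq i else 0)"
  have DgDi: "Dg ** Di = mat 1" unfolding Dg_def Di_def by (rule DgDi[OF sqpos])
  define S where "S = Dg ** A ** Di"
  have Sent: "S$x$z = K x z / (sq x * sq z)" for x z
  proof -
    have "S$x$z = sq x * A$x$z / sq z" unfolding S_def Dg_def Di_def by (rule DAD)
    also have "\<dots> = K x z / (sq x * sq z)" unfolding Aent using sqpos[of x] sqsq[of x, symmetric]
      by (simp add: field_simps)
    finally show ?thesis .
  qed
  have lamS: "lambda2 A = lambda2 S"
    unfolding lambda2_def eigs_desc_def S_def using charpoly_similar[OF DgDi, of A] by simp
  have sym: "transpose S = S"
    by (simp add: vec_eq_iff transpose_def Sent Ksym mult.commute)
  define e :: "real^'a" where "e = (\<chi> x. sq x)"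
  have ee: "e \<bullet> e = 1" unfolding e_def inner_vec_def using sqsq G(5) by simp
  then have ne: "norm e = 1" by (simp add: norm_eq_sqrt_inner)
  have Se: "S *v e = e"
  proof -
    have "(S *v e) $ x = sq x" for x
    proof -
      have t: "K x z / (sq x * sq z) * sq z = K x z / sq x" for z
        using sqpos[of x] sqpos[of z] by (simp add: field_simps)
      have "(S *v e) $ x = (\<Sum>z\<in>UNIV. S$x$z * sq z)"
        unfolding e_def matrix_vector_mult_def by simp
      also have "\<dots> = (\<Sum>z\<in>UNIV. K x z / sq x)"
        by (intro sum.cong refl) (simp only: Sent t)
      also have "\<dots> = (\<Sum>z\<in>UNIV. K x z) / sq x" by (simp add: sum_divide_distrib)
      also have "(\<Sum>z\<in>UNIV. K x z) = mu x"
      proof -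
        have "(\<Sum>z\<in>UNIV. K x z) = (\<Sum>x'\<in>UNIV. mu x' * Q$x'$x * (\<Sum>z\<in>UNIV. Q$x'$z))"
          unfolding K_def sum_distrib_left by (rule sum.swap)
        then show ?thesis using G(2,3) by simp
      qed
      also have "mu x / sq x = sq x" using sqsq[of x] sqpos[of x] by (simp add: field_simps)
      finally show ?thesis .
    qed
    then show ?thesis unfolding e_def by (simp add: vec_eq_iff)
  qed
  have quad: "g \<bullet> (S *v g) = wn mu (ap Q f)" "g \<bullet> g = wn mu f" "g \<bullet> e = (\<Sum>x\<in>UNIV. mu x * f x)"
    if gdef: "g = (\<chi> x. sq x * f x)" for g f
  proof -
    have t2: "(sq x * f x) * (K x z / (sq x * sq z) * (sq z * f z)) = f x * K x z * f z" for x z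
      using sqpos[of x] sqpos[of z] by (simp add: field_simps)
    have "g \<bullet> (S *v g) = (\<Sum>x\<in>UNIV. (sq x * f x) * (\<Sum>z\<in>UNIV. S$x$z * (sq z * f z)))"
      unfolding gdef inner_vec_def matrix_vector_mult_def by simp
    also have "\<dots> = (\<Sum>x\<in>UNIV. \<Sum>z\<in>UNIV. (sq x * f x) * (K x z / (sq x * sq z) * (sq z * f z)))"
      by (simp only: Sent sum_distrib_left)
    also have "\<dots> = (\<Sum>x\<in>UNIV. \<Sum>z\<in>UNIV. f x * K x z * f z)"
      by (simp only: t2)
    also have "\<dots> = (\<Sum>x\<in>UNIV. \<Sum>z\<in>UNIV. \<Sum>x'\<in>UNIV. mu x' * (Q$x'$x * f x) * (Q$x'$z * f z))"
      unfolding K_def by (simp add: sum_distrib_left sum_distrib_right mult_ac)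
    also have "\<dots> = (\<Sum>x'\<in>UNIV. \<Sum>x\<in>UNIV. \<Sum>z\<in>UNIV. mu x' * (Q$x'$x * f x) * (Q$x'$z * f z))"
    proof -
      have "(\<Sum>x\<in>UNIV. \<Sum>z\<in>UNIV. \<Sum>x'\<in>UNIV. mu x' * (Q$x'$x * f x) * (Q$x'$z * f z))
          = (\<Sum>x\<in>UNIV. \<Sum>x'\<in>UNIV. \<Sum>z\<in>UNIV. mu x' * (Q$x'$x * f x) * (Q$x'$z * f z))"
        by (rule sum.cong[OF refl]) (rule sum.swap)
      also have "\<dots> = (\<Sum>x'\<in>UNIV. \<Sum>x\<in>UNIV. \<Sum>z\<in>UNIV. mu x' * (Q$x'$x * f x) * (Q$x'$z * f z))"
        by (rule sum.swap)
      finally show ?thesis .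
    qed
    also have "\<dots> = wn mu (ap Q f)"
      unfolding wn_def ap_def by (simp add: power2_eq_square sum_distrib_left sum_distrib_right mult_ac)
    finally show "g \<bullet> (S *v g) = wn mu (ap Q f)" .
    show "g \<bullet> g = wn mu f" unfolding gdef inner_vec_def wn_def
      by (intro sum.cong refl) (simp add: power2_eq_square sqsq[symmetric] mult_ac)
    show "g \<bullet> e = (\<Sum>x\<in>UNIV. mu x * f x)" unfolding gdef e_def inner_vec_def
      by (intro sum.cong refl) (simp add: sqsq[symmetric] mult_ac)
  qed
  have gform: "g = (\<chi> x. sq x * (\<lambda>x. g$x / sq x) x)" for g :: "real^'a"
    using sqpos by (simp add: vec_eq_iff less_imp_neq[symmetric])
  have psd: "0 \<le> g \<bullet> (S *v g)" for g
    using quad(1)[OF gform[of g]] unfolding wn_def using G(4)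
    by (simp add: sum_nonneg less_imp_le)
  have contr: "g \<bullet> (S *v g) \<le> g \<bullet> g" for g
    using quad(1,2)[OF gform[of g]] contraction[OF good] by simp
  have L: "lambda2 S \<ge> 0 \<and> (\<forall>c\<ge>0. lambda2 S \<le> c \<longleftrightarrow> (\<forall>g. g \<bullet> e = 0 \<longrightarrow> g \<bullet> (S *v g) \<le> c * (g \<bullet> g)))"
    by (rule lambda2_char[OF sym ne Se psd contr])
  have eqv: "(\<forall>g. g \<bullet> e = 0 \<longrightarrow> g \<bullet> (S *v g) \<le> c * (g \<bullet> g)) \<longleftrightarrow> Bd mu Q c" for c
  proof
    assume H: "\<forall>g. g \<bullet> e = 0 \<longrightarrow> g \<bullet> (S *v g) \<le> c * (g \<bullet> g)"
    show "Bd mu Q c" unfolding Bd_def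
    proof (intro allI impI)
      fix f assume "(\<Sum>x\<in>UNIV. mu x * f x) = 0"
      then show "wn mu (ap Q f) \<le> c * wn mu f"
        using H[rule_format, of "\<chi> x. sq x * f x"] quad[OF refl, of f] by simp
    qed
  next
    assume H: "Bd mu Q c"
    show "\<forall>g. g \<bullet> e = 0 \<longrightarrow> g \<bullet> (S *v g) \<le> c * (g \<bullet> g)"
    proof (intro allI impI)
      fix g :: "real^'a" assume "g \<bullet> e = 0"
      then show "g \<bullet> (S *v g) \<le> c * (g \<bullet> g)"
        using H quad[OF gform[of g]] unfolding Bd_def by simp
    qed
  qed
  show ?thesis using L eqv lamS unfolding A_def by simp
qed




lemma matpow_add: "matpow A (a + b) = matpow A a ** matpow A b"
  by (induction a) (simp_all add: matrix_mul_assoc)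

lemma matpow_mult: "matpow A (a * b) = matpow (matpow A a) b"
  by (induction b) (simp_all add: matpow_add)

definition statm :: "('n::finite \<Rightarrow> real) \<Rightarrow> real^'n^'n \<Rightarrow> bool" where
  "statm mu A \<longleftrightarrow> (\<forall>y. (\<Sum>x\<in>UNIV. mu x * A$x$y) = mu y)"

lemma statm_mul:
  assumes "statm mu A" "statm mu B" shows "statm mu (A ** B)"
  unfolding statm_def
proof
  fix y
  have "(\<Sum>x\<in>UNIV. mu x * (A ** B)$x$y) = (\<Sum>x\<in>UNIV. \<Sum>j\<in>UNIV. mu x * A$x$j * B$j$y)"
    by (simp add: matrix_matrix_mult_def sum_distrib_left mult.assoc)
  also have "\<dots> = (\<Sum>j\<in>UNIV. \<Sum>x\<in>UNIV. mu x * A$x$j * B$j$y)" by (rule sum.swap)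
  also have "\<dots> = (\<Sum>j\<in>UNIV. (\<Sum>x\<in>UNIV. mu x * A$x$j) * B$j$y)" by (simp add: sum_distrib_right)
  also have "\<dots> = mu y" using assms unfolding statm_def by simp
  finally show "(\<Sum>x\<in>UNIV. mu x * (A ** B)$x$y) = mu y" .
qed

lemma statm_one: "statm mu (mat 1)"
  unfolding statm_def mat_def by (simp add: if_distrib cong: if_cong)

lemma statm_pow: "statm mu P \<Longrightarrow> statm mu (matpow P k)"
  by (induction k) (auto simp: statm_one statm_mul)

lemma good_iff: "good mu Q \<longleftrightarrow> (\<forall>x. mu x > 0) \<and> (\<Sum>x\<in>UNIV. mu x) = 1 \<and> row_stochastic Q \<and> statm mu Q"
  unfolding good_def row_stochastic_def statm_def by blast

lemma rs_mul:
  assumes "row_stochastic A" "row_stochastic B" shows "row_stochastic (A ** B)"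
  unfolding row_stochastic_def
proof (intro conjI allI)
  fix i j show "(A ** B)$i$j \<ge> 0" using assms unfolding row_stochastic_def matrix_matrix_mult_def
    by (simp add: sum_nonneg)
next
  fix i
  have "(\<Sum>j\<in>UNIV. (A ** B)$i$j) = (\<Sum>j\<in>UNIV. \<Sum>k\<in>UNIV. A$i$k * B$k$j)"
    by (simp add: matrix_matrix_mult_def)
  also have "\<dots> = (\<Sum>k\<in>UNIV. \<Sum>j\<in>UNIV. A$i$k * B$k$j)" by (rule sum.swap)
  also have "\<dots> = (\<Sum>k\<in>UNIV. A$i$k * (\<Sum>j\<in>UNIV. B$k$j))" by (simp add: sum_distrib_left)
  also have "\<dots> = 1" using assms unfolding row_stochastic_def by simp
  finally show "(\<Sum>j\<in>UNIV. (A ** B)$i$j) = 1" .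
qed

lemma rs_one: "row_stochastic (mat 1 :: real^'n::finite^'n)"
  unfolding row_stochastic_def mat_def by (simp add: if_distrib cong: if_cong)

lemma rs_pow: "row_stochastic P \<Longrightarrow> row_stochastic (matpow P k)"
  by (induction k) (auto simp: rs_one rs_mul)

lemma good_pow:
  assumes "(\<forall>x. mu x > 0)" "(\<Sum>x\<in>UNIV. mu x) = 1" "row_stochastic P" "statm mu P"
  shows "good mu (matpow P k)"
  using assms rs_pow statm_pow good_iff by blast

lemma gd_facts:
  assumes "good mu Q"
  shows "0 \<le> gamma_dag mu Q" "gamma_dag mu Q \<le> 1"
    "\<And>c. c \<ge> 0 \<Longrightarrow> Bd mu Q c \<Longrightarrow> gamma_dag mu Q \<ge> 1 - c"
    "Bd mu Q (1 - gamma_dag mu Q)"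
proof -
  note L = lam_Bd[OF assms]
  have B1: "Bd mu Q 1" by (rule Bd_one[OF assms])
  show "0 \<le> gamma_dag mu Q" using L B1 unfolding gamma_dag_def by auto
  show "gamma_dag mu Q \<le> 1" using L unfolding gamma_dag_def by auto
  show "\<And>c. c \<ge> 0 \<Longrightarrow> Bd mu Q c \<Longrightarrow> gamma_dag mu Q \<ge> 1 - c" using L unfolding gamma_dag_def by auto
  show "Bd mu Q (1 - gamma_dag mu Q)" using L unfolding gamma_dag_def by auto
qed

lemma bonf:
  fixes a :: real
  assumes "0 \<le> a" "a \<le> 1"
  shows "(1 - a)^m \<le> 1 - real m * a + (real m * (real m - 1) / 2) * a^2"
proof (induction m)
  case 0 then show ?case by simp
next
  case (Suc m)
  have "(1 - a)^(Suc m) = (1 - a) * (1 - a)^m" by simp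
  also have "\<dots> \<le> (1 - a) * (1 - real m * a + (real m * (real m - 1) / 2) * a^2)"
    using Suc assms by (intro mult_left_mono) auto
  also have "\<dots> = 1 - real (Suc m) * a + (real (Suc m) * (real (Suc m) - 1) / 2) * a^2 - (real m * (real m - 1) / 2) * a^3"
    by (simp add: algebra_simps power2_eq_square power3_eq_cube field_simps)
  also have "\<dots> \<le> 1 - real (Suc m) * a + (real (Suc m) * (real (Suc m) - 1) / 2) * a^2"
  proof -
    have "(real m * (real m - 1) / 2) * a^3 \<ge> 0"
      using assms by (cases m) auto
    then show ?thesis by simp
  qed
  finally show ?case by simp
qed




lemma Bd_pow_mult:
  assumes "\<And>k. good mu (matpow P k)" "Bd mu (matpow P k0) s" "s \<ge> 0"
  shows "Bd mu (matpow P (k0 * m)) (s ^ m)"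
proof (induction m)
  case 0 then show ?case using Bd_one[OF assms(1)[of 0]] by simp
next
  case (Suc m)
  have "matpow P (k0 * Suc m) = matpow P k0 ** matpow P (k0 * m)" by (simp add: matpow_add[symmetric])
  then show ?case using Bd_mul[OF assms(1) assms(2) Suc assms(3)] by simp
qed

lemma gps_lower:
  assumes "\<And>k. good mu (matpow Q k)" "k \<ge> 1"
  shows "gamma_dag mu (matpow Q k) / real k \<le> gamma_ps mu Q"
proof -
  have "bdd_above ((\<lambda>k. gamma_dag mu (matpow Q k) / real k) ` {1::nat..})"
  proof (rule bdd_aboveI2)
    fix k :: nat assume "k \<in> {1..}"
    then show "gamma_dag mu (matpow Q k) / real k \<le> 1"
      using gd_facts(1,2)[OF assms(1)[of k]] by (simp add: divide_le_eq)
  qed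
  then show ?thesis unfolding gamma_ps_def using assms(2) by (intro cSUP_upper) auto
qed

theorem main_core:
  fixes P :: "real ^ 'n::finite ^ 'n" and mu :: "'n \<Rightarrow> real" and p :: nat
  assumes goodP: "\<And>k. good mu (matpow P k)"
    and p1: "p \<ge> 1" and pl: "real p < 1 / gamma_ps mu P"
  shows "gamma_ps mu (matpow P p) > real p * gamma_ps mu P / 4"
proof -
  define \<gamma> where "\<gamma> = gamma_ps mu P"
  have gpos: "\<gamma> > 0"
  proof (rule ccontr)
    assume "\<not> \<gamma> > 0" then have "1 / \<gamma> \<le> 0" by simp
    then show False using pl p1 unfolding \<gamma>_def by linarith
  qed
  have pg: "real p * \<gamma> < 1" using pl gpos unfolding \<gamma>_def by (simp add: field_simps)
  have bdd: "bdd_above ((\<lambda>k. gamma_dag mu (matpow P k) / real k) ` {1::nat..})"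
  proof (rule bdd_aboveI2)
    fix k :: nat assume "k \<in> {1..}"
    then show "gamma_dag mu (matpow P k) / real k \<le> 1"
      using gd_facts(1,2)[OF goodP[of k]] by (simp add: divide_le_eq)
  qed
  have "\<gamma> / 2 < (SUP k\<in>{1::nat..}. gamma_dag mu (matpow P k) / real k)"
    using gpos unfolding \<gamma>_def gamma_ps_def by simp
  then have "\<exists>k\<in>{1::nat..}. \<gamma> / 2 < gamma_dag mu (matpow P k) / real k"
    using less_cSUP_iff[OF _ bdd, of "\<gamma> / 2"] by blast
  then obtain k0 :: nat where k0: "k0 \<ge> 1" "\<gamma> / 2 < gamma_dag mu (matpow P k0) / real k0"
    by auto
  define g0 where "g0 = gamma_dag mu (matpow P k0) / real k0"
  define a where "a = gamma_dag mu (matpow P k0)"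
  have g0le: "g0 \<le> \<gamma>" unfolding g0_def \<gamma>_def using gps_lower[OF goodP k0(1)] .
  have g0gt: "g0 > \<gamma> / 2" using k0(2) unfolding g0_def .
  have a_eq: "a = real k0 * g0" unfolding a_def g0_def using k0(1) by simp
  have a01: "0 < a" "a \<le> 1" using gd_facts(2)[OF goodP[of k0]] a_eq g0gt gpos k0(1)
    unfolding a_def by (auto intro: mult_pos_pos)
  define s where "s = 1 - a"
  have s0: "s \<ge> 0" unfolding s_def using a01 by simp
  have Bds: "Bd mu (matpow P k0) s" unfolding s_def a_def by (rule gd_facts(4)[OF goodP])
  have goodPp: "\<And>k. good mu (matpow (matpow P p) k)" using goodP by (simp add: matpow_mult[symmetric])
  have main: "gamma_ps mu (matpow P p) \<ge> real p * g0 / 2"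
  proof (cases "p < k0")
    case True
    define k' where "k' = k0 div p + 1"
    have k'1: "k' \<ge> 1" unfolding k'_def by simp
    have "k0 < p * k'"
    proof -
      have e: "p * (k0 div p) + k0 mod p = k0" by (rule mult_div_mod_eq)
      have "k0 mod p < p" using p1 by (intro mod_less_divisor) linarith
      moreover have "p * k' = p * (k0 div p) + p" unfolding k'_def by (simp only: distrib_left mult_1_right)
      ultimately show ?thesis using e by linarith
    qed
    then obtain r where r: "p * k' = k0 + r" using le_Suc_ex[OF less_imp_le] by blast
    have "Bd mu (matpow P k0 ** matpow P r) (s * 1)"
      by (rule Bd_mul[OF goodP Bds Bd_one[OF goodP] s0])
    then have "Bd mu (matpow P (p * k')) s" using r by (simp add: matpow_add)
    then have gd: "gamma_dag mu (matpow P (p * k')) \<ge> a"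
      using gd_facts(3)[OF goodP s0] unfolding s_def by simp
    have "a / real k' \<le> gamma_dag mu (matpow P (p * k')) / real k'"
      using gd k'1 by (simp add: divide_right_mono)
    also have "\<dots> \<le> gamma_ps mu (matpow P p)"
      using gps_lower[OF goodPp k'1] by (simp add: matpow_mult)
    finally have L: "a / real k' \<le> gamma_ps mu (matpow P p)" .
    have "real p * real k' \<le> 2 * real k0"
    proof -
      have "p * (k0 div p) \<le> k0" by simp
      then have "p * k' \<le> k0 + p" unfolding k'_def by simp
      then have "p * k' \<le> 2 * k0" using True by linarith
      then have "real (p * k') \<le> real (2 * k0)" by (simp only: of_nat_le_iff)
      then show ?thesis by simp
    qed
    moreover have g0nn: "g0 \<ge> 0" using g0gt gpos by simp
    ultimately have "real p * real k' * g0 \<le> 2 * real k0 * g0" by (rule mult_right_mono)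
    moreover have "real k' > 0" using k'1 by simp
    ultimately have "real p * g0 / 2 \<le> real k0 * g0 / real k'" by (simp add: field_simps)
    then have "real p * g0 / 2 \<le> a / real k'" using a_eq by simp
    then show ?thesis using L by linarith
  next
    case False
    define m where "m = p div k0"
    define r where "r = p mod k0"
    have pdec: "p = k0 * m + r" unfolding m_def r_def by simp
    have m1: "m \<ge> 1"
    proof -
      have "k0 div k0 \<le> p div k0" using False by (intro div_le_mono) simp
      then show ?thesis unfolding m_def using k0(1) by simp
    qed
    have plt: "p < k0 * (m + 1)"
    proof -
      have "r < k0" unfolding r_def using k0(1) by simp
      then show ?thesis using pdec by (simp add: algebra_simps)
    qed
    have "Bd mu (matpow P (k0 * m) ** matpow P r) (s ^ m * 1)"
      by (rule Bd_mul[OF goodP Bd_pow_mult[OF goodP Bds s0] Bd_one[OF goodP]]) (use s0 in simp)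
    then have "Bd mu (matpow P p) (s ^ m)" using pdec by (simp add: matpow_add)
    then have gd: "gamma_dag mu (matpow P p) \<ge> 1 - s ^ m"
      using gd_facts(3)[OF goodP] s0 by simp
    have "gamma_dag mu (matpow (matpow P p) 1) / real (1::nat) \<le> gamma_ps mu (matpow P p)"
      by (rule gps_lower[OF goodPp]) simp
    then have L: "1 - s ^ m \<le> gamma_ps mu (matpow P p)" using gd by simp
    have ma: "real m * a < 1"
    proof -
      have "real m * a = real (k0 * m) * g0" using a_eq by simp
      also have "\<dots> \<le> real p * g0" using pdec g0gt gpos
        by (intro mult_right_mono) auto
      also have "\<dots> \<le> real p * \<gamma>" using g0le by (simp add: mult_left_mono)
      finally show ?thesis using pg by linarith
    qed
    have "s ^ m \<le> 1 - real m * a + (real m * (real m - 1) / 2) * a^2"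
      unfolding s_def using bonf[of a m] a01 by simp
    then have "1 - s ^ m \<ge> real m * a - (real m * (real m - 1) / 2) * a^2" by simp
    moreover have "real m * a - (real m * (real m - 1) / 2) * a^2 \<ge> (real m + 1) * a / 2"
    proof -
      have "real m * a - (real m * (real m - 1) / 2) * a^2 - (real m + 1) * a / 2
          = a * (real m - 1) * (1 - real m * a) / 2"
        by (simp add: field_simps power2_eq_square)
      moreover have "a * (real m - 1) * (1 - real m * a) / 2 \<ge> 0"
        using a01 m1 ma by simp
      ultimately show ?thesis by linarith
    qed
    moreover have "(real m + 1) * a / 2 \<ge> real p * g0 / 2"
    proof -
      have "p \<le> k0 * (m + 1)" using plt by simp
      then have "real p \<le> real (k0 * (m + 1))" by (simp only: of_nat_le_iff)
      then have "real p \<le> real k0 * (real m + 1)" by (simp add: algebra_simps)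
      then have "real p * g0 \<le> real k0 * (real m + 1) * g0" using g0gt gpos
        by (intro mult_right_mono) auto
      then show ?thesis using a_eq by (simp add: algebra_simps)
    qed
    ultimately show ?thesis using L by linarith
  qed
  have "real p * \<gamma> / 4 < real p * g0 / 2" using g0gt p1 by (simp add: field_simps)
  then show ?thesis using main unfolding \<gamma>_def by linarith
qed




theorem mainTheorem7:
  fixes P :: "real ^ 'n::finite ^ 'n" and mu :: "'n \<Rightarrow> real" and p :: nat
  assumes "row_stochastic P"
    and "primitive P"
    and "stationary P mu"
    and "p \<ge> 1"
    and "real p < 1 / gamma_ps mu P"
  shows "gamma_ps mu (matpow P p) >
           real p * gamma_ps mu P / (2 * ln (4 * exp 1 / pi_star mu) + 2)"
proof -
  have mu0: "\<And>x. mu x \<ge> 0" and mu1: "(\<Sum>x\<in>UNIV. mu x) = 1" and st: "statm mu P"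
    using assms(3) unfolding stationary_def statm_def by auto
  obtain k where kpos: "\<And>i j. matpow P k $ i $ j > 0"
    using assms(2) unfolding primitive_def by blast
  have stk: "statm mu (matpow P k)" by (rule statm_pow[OF st])
  have rsk: "row_stochastic (matpow P k)" by (rule rs_pow[OF assms(1)])
  obtain x0 where x0: "mu x0 > 0"
  proof (rule ccontr)
    assume "\<not> thesis"
    then have "\<forall>x. mu x \<le> 0" using that by (meson not_le)
    then have "(\<Sum>x\<in>UNIV. mu x) \<le> 0" by (simp add: sum_nonpos)
    then show False using mu1 by simp
  qed
  have mupos: "\<forall>y. mu y > 0"
  proof
    fix y
    have "mu x0 * matpow P k $ x0 $ y \<le> (\<Sum>x\<in>UNIV. mu x * matpow P k $ x $ y)"
      by (rule member_le_sum) (use mu0 rsk in \<open>auto simp: row_stochastic_def\<close>)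
    also have "\<dots> = mu y" using stk unfolding statm_def by simp
    finally show "mu y > 0" using x0 kpos[of x0 y] by (meson less_le_trans mult_pos_pos)
  qed
  have goodP: "\<And>k. good mu (matpow P k)" by (rule good_pow[OF mupos mu1 assms(1) st])
  have core: "gamma_ps mu (matpow P p) > real p * gamma_ps mu P / 4"
    by (rule main_core[OF goodP assms(4,5)])
  have gpos: "gamma_ps mu P > 0"
  proof (rule ccontr)
    assume "\<not> gamma_ps mu P > 0" then have "1 / gamma_ps mu P \<le> 0" by simp
    then show False using assms(4,5) by linarith
  qed
  define ps where "ps = pi_star mu"
  have ps_in: "ps \<in> range mu" unfolding ps_def pi_star_def by (rule Min_in) auto
  have ps0: "ps > 0" using ps_in mupos by auto
  have ps1: "ps \<le> 1"
  proof -
    obtain x where "ps = mu x" using ps_in by auto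
    moreover have "mu x \<le> (\<Sum>x\<in>UNIV. mu x)" by (rule member_le_sum) (use mu0 in auto)
    ultimately show ?thesis using mu1 by simp
  qed
  have "exp 1 \<le> 4 * exp 1 / ps" using ps0 ps1 by (simp add: field_simps)
  then have "ln (exp 1) \<le> ln (4 * exp 1 / ps)" using ps0 by (subst ln_le_cancel_iff) auto
  then have C4: "2 * ln (4 * exp 1 / ps) + 2 \<ge> 4" by simp
  have "real p * gamma_ps mu P / (2 * ln (4 * exp 1 / ps) + 2) \<le> real p * gamma_ps mu P / 4"
    using C4 gpos by (intro divide_left_mono) auto
  then show ?thesis using core unfolding ps_def by linarith
qed


end
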